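(* Let $N$ be a Poisson process on $[0,\infty)$ with intensity $\lambda>0$, with points $0<X_1<X_2<\cdots$, and let $\epsilon>0$. Then the family $\{B_i, D_i : i\ge 1\}$ consists of independent random variables; each $D_i$ is exponentially distributed with mean $1/\lambda$, and the random variables $B_i$, $i\ge1$, are identically distributed.
   Context: A cluster is a maximal set of consecutive points $X_j,\dots,X_k$ with $X_{l+1}-X_l\le\epsilon$ for $j\le l<k$. Clusters are numbered from left to right; $A_i$ denotes the first point of the $i$-th cluster and $E_i=X_k+\epsilon$, where $X_k$ is the last point of the $i$-th cluster. The cluster length is $B_i=E_i-A_i$ and the intercluster size is $D_i=A_{i+1}-E_i$. *)

theory Defs
  imports "HOL-Probability.Probability" "HOL-Library.Infinite_Set"
begin

text \<open>Points of the Poisson process built from the interarrival times T 0, T 1, ...: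
  the n-th point (n >= 1) is X_n = T 0 + ... + T (n-1).\<close>
definition pp_point :: "(nat \<Rightarrow> real) \<Rightarrow> nat \<Rightarrow> real" where
  "pp_point T n = (\<Sum>k<n. T k)"

text \<open>Indices k >= 1 such that X_k is the last point of a cluster (gap to next point > eps).\<close>
definition cl_gaps :: "real \<Rightarrow> (nat \<Rightarrow> real) \<Rightarrow> nat set" where
  "cl_gaps eps T = {k. 1 \<le> k \<and> pp_point T (Suc k) - pp_point T k > eps}"

definition cl_last :: "real \<Rightarrow> (nat \<Rightarrow> real) \<Rightarrow> nat \<Rightarrow> nat" where
  "cl_last eps T i = enumerate (cl_gaps eps T) (i - 1)"

definition cl_first :: "real \<Rightarrow> (nat \<Rightarrow> real) \<Rightarrow> nat \<Rightarrow> nat" where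
  "cl_first eps T i = (if i \<le> 1 then 1 else Suc (cl_last eps T (i - 1)))"

definition cl_A :: "real \<Rightarrow> (nat \<Rightarrow> real) \<Rightarrow> nat \<Rightarrow> real" where
  "cl_A eps T i = pp_point T (cl_first eps T i)"

definition cl_E :: "real \<Rightarrow> (nat \<Rightarrow> real) \<Rightarrow> nat \<Rightarrow> real" where
  "cl_E eps T i = pp_point T (cl_last eps T i) + eps"

definition cl_B :: "real \<Rightarrow> (nat \<Rightarrow> real) \<Rightarrow> nat \<Rightarrow> real" where
  "cl_B eps T i = cl_E eps T i - cl_A eps T i"

definition cl_D :: "real \<Rightarrow> (nat \<Rightarrow> real) \<Rightarrow> nat \<Rightarrow> real" where
  "cl_D eps T i = cl_A eps T (Suc i) - cl_E eps T i"

end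

theory Submission
  imports Defs "HOL-Library.FuncSet"
begin
lemma pp_Suc: "pp_point t (Suc k) = pp_point t k + t k"
  by (simp add: pp_point_def)

lemma cl_gaps_eq: "cl_gaps eps t = {k. 1 \<le> k \<and> t k > eps}"
  by (simp add: cl_gaps_def pp_Suc)

lemma enum0_shift:
  fixes S :: "nat set"
  assumes "S \<noteq> {}"
  shows "enumerate ((\<lambda>x. x + c) ` S) 0 = enumerate S 0 + c"
proof -
  obtain s where s: "s \<in> S" using assms by blast
  have "(LEAST n. n \<in> (\<lambda>x. x + c) ` S) = (LEAST n. n \<in> S) + c"
  proof (rule Least_equality)
    show "(LEAST n. n \<in> S) + c \<in> (\<lambda>x. x + c) ` S" using s by (auto intro: LeastI)
    show "\<And>y. y \<in> (\<lambda>x. x + c) ` S \<Longrightarrow> (LEAST n. n \<in> S) + c \<le> y"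
      by (auto intro: Least_le)
  qed
  then show ?thesis by (simp add: enumerate_0)
qed

lemma enum_shift:
  fixes S :: "nat set"
  assumes "infinite S"
  shows "enumerate ((\<lambda>x. x + c) ` S) n = enumerate S n + c"
  using assms
proof (induction n arbitrary: S)
  case 0
  then show ?case using enum0_shift infinite_imp_nonempty by blast
next
  case (Suc n)
  have ne: "S \<noteq> {}" using Suc.prems infinite_imp_nonempty by blast
  have "enumerate ((\<lambda>x. x + c) ` S) (Suc n) = enumerate ((\<lambda>x. x + c) ` S - {enumerate S 0 + c}) n"
    by (simp add: enumerate_Suc' enum0_shift[OF ne])
  also have "(\<lambda>x. x + c) ` S - {enumerate S 0 + c} = (\<lambda>x. x + c) ` (S - {enumerate S 0})"
    by auto
  also have "enumerate \<dots> n = enumerate (S - {enumerate S 0}) n + c"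
    using Suc.IH Suc.prems by (simp add: infinite_remove)
  finally show ?case by (simp add: enumerate_Suc')
qed

definition shft :: "real \<Rightarrow> (nat \<Rightarrow> real) \<Rightarrow> nat \<Rightarrow> real" where
  "shft eps t = (\<lambda>k. if k = 0 then t 0 else t (enumerate (cl_gaps eps t) 0 + k))"

lemma Lst_ge1: "infinite (cl_gaps eps t) \<Longrightarrow> 1 \<le> enumerate (cl_gaps eps t) k"
  using enumerate_in_set[of "cl_gaps eps t" k] by (simp add: cl_gaps_eq)

lemma gaps_shft:
  assumes inf: "infinite (cl_gaps eps t)"
  defines "L \<equiv> enumerate (cl_gaps eps t) 0"
  shows "cl_gaps eps t - {L} = (\<lambda>x. x + L) ` cl_gaps eps (shft eps t)"
proof -
  have Lin: "L \<in> cl_gaps eps t" unfolding L_def using enumerate_in_set[OF inf] .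
  have Lle: "\<And>x. x \<in> cl_gaps eps t \<Longrightarrow> L \<le> x" unfolding L_def enumerate_0 by (rule Least_le)
  have L': "enumerate {k. Suc 0 \<le> k \<and> eps < t k} 0 = L" by (simp add: L_def cl_gaps_eq)
  show ?thesis
  proof (intro equalityI subsetI)
    fix x assume x: "x \<in> cl_gaps eps t - {L}"
    then have "L < x" using Lle by force
    moreover have "x - L \<in> cl_gaps eps (shft eps t)"
      using x \<open>L < x\<close> by (auto simp: cl_gaps_eq shft_def L')
    ultimately show "x \<in> (\<lambda>x. x + L) ` cl_gaps eps (shft eps t)"
      by (intro image_eqI[of _ _ "x - L"]) auto
  next
    fix x assume "x \<in> (\<lambda>x. x + L) ` cl_gaps eps (shft eps t)"
    then obtain y where "x = y + L" "y \<in> cl_gaps eps (shft eps t)" by blast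
    then show "x \<in> cl_gaps eps t - {L}"
      by (auto simp: cl_gaps_eq shft_def L' add.commute)
  qed
qed

lemma shft_inf:
  assumes inf: "infinite (cl_gaps eps t)"
  shows "infinite (cl_gaps eps (shft eps t))"
  using gaps_shft[OF inf] inf by (metis finite_imageI infinite_remove)

lemma enum_shft:
  assumes inf: "infinite (cl_gaps eps t)"
  shows "enumerate (cl_gaps eps t) (Suc n) = enumerate (cl_gaps eps (shft eps t)) n + enumerate (cl_gaps eps t) 0"
  unfolding enumerate_Suc' gaps_shft[OF inf] using enum_shift[OF shft_inf[OF inf]] by simp

lemma shft_last:
  assumes inf: "infinite (cl_gaps eps t)" and i: "1 \<le> i"
  shows "cl_last eps t (Suc i) = cl_last eps (shft eps t) i + enumerate (cl_gaps eps t) 0"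
proof -
  obtain j where j: "i = Suc j" using i by (cases i) auto
  show ?thesis unfolding cl_last_def j using enum_shft[OF inf, of j] by simp
qed

lemma shft_first:
  assumes inf: "infinite (cl_gaps eps t)" and i: "1 \<le> i"
  shows "cl_first eps t (Suc i) = cl_first eps (shft eps t) i + enumerate (cl_gaps eps t) 0"
proof (cases "i = 1")
  case True
  then show ?thesis by (simp add: cl_first_def cl_last_def)
next
  case False
  then have "Suc i > 1" "i > 1" "1 \<le> i - 1" using i by auto
  then show ?thesis using shft_last[OF inf \<open>1 \<le> i - 1\<close>] \<open>i > 1\<close>
    by (simp add: cl_first_def)
qed

lemma pp_shft:
  assumes "1 \<le> a"
  shows "pp_point (shft eps t) a = t 0 - pp_point t (Suc (enumerate (cl_gaps eps t) 0)) + pp_point t (a + enumerate (cl_gaps eps t) 0)"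
  using assms
proof (induction a rule: dec_induct)
  case base
  then show ?case by (simp add: pp_point_def shft_def)
next
  case (step a)
  then show ?case by (simp add: pp_Suc shft_def add.commute)
qed

lemma cl_first_ge1: "1 \<le> cl_first eps t i"
  by (simp add: cl_first_def)

lemma cl_last_ge1: "infinite (cl_gaps eps t) \<Longrightarrow> 1 \<le> cl_last eps t i"
  unfolding cl_last_def by (rule Lst_ge1)

lemma B_shft:
  assumes inf: "infinite (cl_gaps eps t)" and i: "1 \<le> i"
  shows "cl_B eps t (Suc i) = cl_B eps (shft eps t) i"
  using pp_shft[where a="cl_first eps (shft eps t) i" and eps=eps and t=t, OF cl_first_ge1]
    pp_shft[where a="cl_last eps (shft eps t) i" and eps=eps and t=t, OF cl_last_ge1[OF shft_inf[OF inf]]]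
    shft_last[OF inf i] shft_first[OF inf i]
  by (simp add: cl_B_def cl_A_def cl_E_def)

lemma D_shft:
  assumes inf: "infinite (cl_gaps eps t)" and i: "1 \<le> i"
  shows "cl_D eps t (Suc i) = cl_D eps (shft eps t) i"
  using pp_shft[where a="cl_first eps (shft eps t) (Suc i)" and eps=eps and t=t, OF cl_first_ge1]
    pp_shft[where a="cl_last eps (shft eps t) i" and eps=eps and t=t, OF cl_last_ge1[OF shft_inf[OF inf]]]
    shft_last[OF inf i] shft_first[OF inf, of "Suc i"] i
  by (simp add: cl_D_def cl_A_def cl_E_def)

lemma first_cluster:
  assumes ne: "cl_gaps eps t \<noteq> {}"
  defines "L \<equiv> enumerate (cl_gaps eps t) 0"
  shows "cl_B eps t 1 = eps + (\<Sum>k\<in>{1..<L}. t k)" "cl_D eps t 1 = t L - eps"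
proof -
  have Lin: "L \<in> cl_gaps eps t" unfolding L_def enumerate_0 using ne by (auto intro: LeastI)
  then have L1: "1 \<le> L" by (simp add: cl_gaps_eq)
  have "pp_point t L = t 0 + (\<Sum>k\<in>{1..<L}. t k)"
    unfolding pp_point_def lessThan_atLeast0 using L1 by (simp add: sum.atLeast_Suc_lessThan)
  then show "cl_B eps t 1 = eps + (\<Sum>k\<in>{1..<L}. t k)"
    by (simp add: cl_B_def cl_A_def cl_E_def cl_first_def cl_last_def L_def pp_point_def)
  show "cl_D eps t 1 = t L - eps"
    by (simp add: cl_D_def cl_A_def cl_E_def cl_first_def cl_last_def L_def pp_Suc)
qed

lemma meas_enum:
  fixes H :: "'b \<Rightarrow> nat set"
  assumes "\<And>k. {x\<in>space N. k \<in> H x} \<in> sets N"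
  shows "(\<lambda>x. enumerate (H x) n) \<in> measurable N (count_space UNIV)"
  using assms
proof (induction n arbitrary: H)
  case 0
  have "(\<lambda>x. LEAST k. k \<in> H x) \<in> measurable N (count_space UNIV)"
    by (rule measurable_Least[where P="\<lambda>k x. k \<in> H x"]) (use 0 in \<open>simp add: pred_def\<close>)
  then show ?case by (simp add: enumerate_0)
next
  case (Suc n)
  have L: "(\<lambda>x. LEAST k. k \<in> H x) \<in> measurable N (count_space UNIV)"
    by (rule measurable_Least[where P="\<lambda>k x. k \<in> H x"]) (use Suc.prems in \<open>simp add: pred_def\<close>)
  have "\<And>k. {x\<in>space N. k \<in> H x - {LEAST k. k \<in> H x}} \<in> sets N"
  proof -
    fix k
    have "{x\<in>space N. k \<in> H x - {LEAST k. k \<in> H x}} =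
      {x\<in>space N. k \<in> H x} \<inter> ((\<lambda>x. LEAST k. k \<in> H x) -` (UNIV - {k}) \<inter> space N)" by auto
    also have "\<dots> \<in> sets N"
      using Suc.prems measurable_sets[OF L, of "UNIV - {k}"] by (rule_tac sets.Int) auto
    finally show "{x\<in>space N. k \<in> H x - {LEAST k. k \<in> H x}} \<in> sets N" .
  qed
  from Suc.IH[OF this] show ?case by (simp add: enumerate_Suc)
qed

context
  fixes N :: "'b measure" and t :: "'b \<Rightarrow> nat \<Rightarrow> real" and eps :: real
  assumes tm: "\<And>k. (\<lambda>x. t x k) \<in> borel_measurable N"
begin

lemma meas_gaps: "{x\<in>space N. k \<in> cl_gaps eps (t x)} \<in> sets N"
  using tm[of k] by (simp add: cl_gaps_eq)

lemma meas_enum_gaps: "(\<lambda>x. enumerate (cl_gaps eps (t x)) n) \<in> measurable N (count_space UNIV)"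
  by (rule meas_enum) (rule meas_gaps)

lemma meas_last: "(\<lambda>x. cl_last eps (t x) i) \<in> measurable N (count_space UNIV)"
  unfolding cl_last_def by (rule meas_enum_gaps)

lemma meas_first: "(\<lambda>x. cl_first eps (t x) i) \<in> measurable N (count_space UNIV)"
  unfolding cl_first_def using meas_last by (cases "i \<le> 1") auto

lemma meas_pp:
  assumes g: "g \<in> measurable N (count_space UNIV)"
  shows "(\<lambda>x. pp_point (t x) (g x)) \<in> borel_measurable N"
proof (rule measurable_compose_countable'[where I=UNIV, OF _ g])
  fix i :: nat show "(\<lambda>x. pp_point (t x) i) \<in> borel_measurable N"
    unfolding pp_point_def using tm by measurable
qed simp

lemma meas_B: "(\<lambda>x. cl_B eps (t x) i) \<in> borel_measurable N"
  unfolding cl_B_def cl_A_def cl_E_def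
  using meas_pp[OF meas_last] meas_pp[OF meas_first] by measurable

lemma meas_D: "(\<lambda>x. cl_D eps (t x) i) \<in> borel_measurable N"
  unfolding cl_D_def cl_A_def cl_E_def
  using meas_pp[OF meas_last] meas_pp[OF meas_first] by measurable

lemma meas_shft: "(\<lambda>x. shft eps (t x)) \<in> measurable N (PiM UNIV (\<lambda>_. borel :: real measure))"
proof -
  have "(\<lambda>x. shft eps (t x) k) \<in> borel_measurable N" for k
  proof (cases "k = 0")
    case True then show ?thesis using tm by (simp add: shft_def)
  next
    case False
    have "(\<lambda>x. t x (enumerate (cl_gaps eps (t x)) 0 + k)) \<in> borel_measurable N"
      by (rule measurable_compose_countable'[where I=UNIV and g="\<lambda>x. enumerate (cl_gaps eps (t x)) 0"])
         (use tm meas_enum_gaps in auto)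
    then show ?thesis using False by (simp add: shft_def)
  qed
  then show ?thesis
    by (intro measurable_PiM_single') (auto simp: shft_def)
qed

end

lemma (in prob_space) indep_vars_reindex_inj:
  assumes ind: "indep_vars M' X I" and inj: "inj_on f J" and fJ: "f ` J \<subseteq> I"
  shows "indep_vars (\<lambda>j. M' (f j)) (\<lambda>j. X (f j)) J"
  unfolding indep_vars_def2
proof safe
  fix j assume "j \<in> J" then show "random_variable (M' (f j)) (X (f j))"
    using ind fJ by (auto simp: indep_vars_def2)
next
  have I: "indep_sets (\<lambda>i. {X i -` A \<inter> space M |A. A \<in> sets (M' i)}) I"
    using ind by (simp add: indep_vars_def2)
  show "indep_sets (\<lambda>i. {X (f i) -` A \<inter> space M |A. A \<in> sets (M' (f i))}) J"
    unfolding indep_sets_def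
  proof (intro conjI ballI allI impI)
    fix j assume "j \<in> J" then show "{X (f j) -` A \<inter> space M |A. A \<in> sets (M' (f j))} \<subseteq> events"
      using I fJ unfolding indep_sets_def by blast
  next
    fix K A assume K: "K \<subseteq> J" "K \<noteq> {}" "finite K"
      and A: "A \<in> (\<Pi> j\<in>K. {X (f j) -` A \<inter> space M |A. A \<in> sets (M' (f j))})"
    define A' where "A' i = A (the_inv_into K f i)" for i
    have injK: "inj_on f K" using inj K by (auto intro: inj_on_subset)
    have A'f: "\<And>j. j \<in> K \<Longrightarrow> A' (f j) = A j"
      unfolding A'_def using the_inv_into_f_f[OF injK] by simp
    have "prob (\<Inter>i\<in>f ` K. A' i) = (\<Prod>i\<in>f ` K. prob (A' i))"
    proof (rule indep_setsD[OF I])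
      show "f ` K \<subseteq> I" "f ` K \<noteq> {}" "finite (f ` K)" using K fJ by auto
      show "\<forall>i\<in>f ` K. A' i \<in> {X i -` A \<inter> space M |A. A \<in> sets (M' i)}"
        using A by (auto simp: A'f)
    qed
    also have "(\<Inter>i\<in>f ` K. A' i) = (\<Inter>j\<in>K. A j)" using A'f by auto
    also have "(\<Prod>i\<in>f ` K. prob (A' i)) = (\<Prod>j\<in>K. prob (A j))"
      using injK A'f by (simp add: prod.reindex)
    finally show "prob (\<Inter>j\<in>K. A j) = (\<Prod>j\<in>K. prob (A j))" .
  qed
qed

abbreviation "SQ \<equiv> PiM (UNIV :: nat set) (\<lambda>_. borel :: real measure)"

locale clus = prob_space M for M :: "'a measure" +
  fixes T :: "nat \<Rightarrow> 'a \<Rightarrow> real" and eps :: real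
  assumes eps_pos: "eps > 0"
    and ident: "\<And>k. distr M borel (T k) = distr M borel (T 0)"
    and indep: "indep_vars (\<lambda>_. borel) T UNIV"
    and pos: "prob {\<omega>\<in>space M. eps < T 0 \<omega>} > 0"
begin

abbreviation "sq \<omega> \<equiv> (\<lambda>k. T k \<omega>)"

lemma Tm[measurable]: "T k \<in> borel_measurable M"
  using indep by (auto simp: indep_vars_def)

lemma sq_meas[measurable]: "(\<lambda>\<omega>. sq \<omega>) \<in> measurable M SQ"
  by (rule measurable_PiM_single') auto

lemma law_inj:
  assumes inj: "inj f"
  shows "distr M SQ (\<lambda>\<omega> k. T (f k) \<omega>) = distr M SQ sq"
proof -
  have i1: "indep_vars (\<lambda>_. borel) (\<lambda>k. T (f k)) UNIV"
    using indep_vars_reindex_inj[OF indep inj] by simp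
  have "distr M SQ (\<lambda>\<omega> k. T (f k) \<omega>) = PiM UNIV (\<lambda>k. distr M borel (T (f k)))"
    using iffD1[OF indep_vars_iff_distr_eq_PiM[where I=UNIV and M'="\<lambda>_. borel" and X="\<lambda>k. T (f k)"] i1] by (simp add: restrict_UNIV)
  also have "\<dots> = PiM UNIV (\<lambda>k. distr M borel (T 0))"
    by (intro PiM_cong refl ident)
  also have "\<dots> = PiM UNIV (\<lambda>k. distr M borel (T k))"
    by (intro PiM_cong refl ident[symmetric])
  also have "\<dots> = distr M SQ sq"
    using iffD1[OF indep_vars_iff_distr_eq_PiM[where I=UNIV and M'="\<lambda>_. borel" and X=T] indep] by (simp add: restrict_UNIV)
  finally show ?thesis .
qed

lemma prob_inj:
  assumes inj: "inj f" and F: "F \<in> sets SQ"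
  shows "prob {\<omega>\<in>space M. (\<lambda>k. T (f k) \<omega>) \<in> F} = prob {\<omega>\<in>space M. sq \<omega> \<in> F}"
proof -
  have m: "(\<lambda>\<omega> k. T (f k) \<omega>) \<in> measurable M SQ"
    by (rule measurable_PiM_single') auto
  have "prob {\<omega>\<in>space M. (\<lambda>k. T (f k) \<omega>) \<in> F} = measure (distr M SQ (\<lambda>\<omega> k. T (f k) \<omega>)) F"
    using F m by (simp add: measure_distr vimage_def Int_def conj_commute)
  also have "\<dots> = measure (distr M SQ sq) F" using law_inj[OF inj] by simp
  also have "\<dots> = prob {\<omega>\<in>space M. sq \<omega> \<in> F}"
    using F by (simp add: measure_distr vimage_def Int_def conj_commute)
  finally show ?thesis .
qed

lemma ind2:
  assumes K: "K1 \<inter> K2 = {}"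
    and P1: "P1 \<in> sets (PiM K1 (\<lambda>_. borel :: real measure))"
    and P2: "P2 \<in> sets (PiM K2 (\<lambda>_. borel :: real measure))"
  shows "prob {\<omega>\<in>space M. restrict (sq \<omega>) K1 \<in> P1 \<and> restrict (sq \<omega>) K2 \<in> P2}
       = prob {\<omega>\<in>space M. restrict (sq \<omega>) K1 \<in> P1} * prob {\<omega>\<in>space M. restrict (sq \<omega>) K2 \<in> P2}"
proof -
  have iv: "indep_var (PiM K1 (\<lambda>_. borel)) (\<lambda>\<omega>. restrict (sq \<omega>) K1) (PiM K2 (\<lambda>_. borel)) (\<lambda>\<omega>. restrict (sq \<omega>) K2)"
    using indep_var_restrict[OF indep K] by simp
  from indep_varD[OF iv P1 P2] show ?thesis
    by (simp add: vimage_def Int_def conj_commute)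
qed

end

context clus
begin

lemma prob_T:
  assumes A: "A \<in> sets borel"
  shows "prob {\<omega>\<in>space M. T k \<omega> \<in> A} = prob {\<omega>\<in>space M. T 0 \<omega> \<in> A}"
proof -
  have "prob {\<omega>\<in>space M. T k \<omega> \<in> A} = measure (distr M borel (T k)) A"
    using A by (simp add: measure_distr vimage_def Int_def conj_commute)
  also have "\<dots> = measure (distr M borel (T 0)) A" by (simp add: ident[of k])
  also have "\<dots> = prob {\<omega>\<in>space M. T 0 \<omega> \<in> A}"
    using A by (simp add: measure_distr vimage_def Int_def conj_commute)
  finally show ?thesis .
qed

definition "pp = prob {\<omega>\<in>space M. T 0 \<omega> \<le> eps}"

lemma pp_lt1: "pp < 1" and pp_ge0: "0 \<le> pp"
proof -
  have "{\<omega>\<in>space M. T 0 \<omega> \<le> eps} = space M - {\<omega>\<in>space M. eps < T 0 \<omega>}" by auto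
  then have "pp = 1 - prob {\<omega>\<in>space M. eps < T 0 \<omega>}"
    unfolding pp_def by (simp add: prob_compl)
  then show "pp < 1" using pos by simp
  show "0 \<le> pp" unfolding pp_def by simp
qed

lemma block_le: "prob {\<omega>\<in>space M. \<forall>k\<in>{N..<N+m}. T k \<omega> \<le> eps} = pp ^ m"
proof (cases "m = 0")
  case True then show ?thesis by (simp add: prob_space)
next
  case False
  have "prob (\<Inter>i\<in>{N..<N+m}. T i -` {..eps} \<inter> space M) = (\<Prod>i\<in>{N..<N+m}. prob (T i -` {..eps} \<inter> space M))"
    using False by (intro indep_varsD[OF indep]) auto
  also have "(\<Inter>i\<in>{N..<N+m}. T i -` {..eps} \<inter> space M) = {\<omega>\<in>space M. \<forall>k\<in>{N..<N+m}. T k \<omega> \<le> eps}"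
    using False by auto
  also have "(\<Prod>i\<in>{N..<N+m}. prob (T i -` {..eps} \<inter> space M)) = (\<Prod>i\<in>{N..<N+m}. pp)"
  proof (rule prod.cong[OF refl])
    fix i
    have "prob (T i -` {..eps} \<inter> space M) = prob {\<omega>\<in>space M. T i \<omega> \<in> {..eps}}"
      by (simp add: vimage_def Int_def conj_commute)
    also have "\<dots> = pp" unfolding pp_def by (subst prob_T) auto
    finally show "prob (T i -` {..eps} \<inter> space M) = pp" .
  qed
  finally show ?thesis by simp
qed

lemma tail_null: "prob {\<omega>\<in>space M. \<forall>k\<ge>N. T k \<omega> \<le> eps} = 0"
proof -
  have le: "prob {\<omega>\<in>space M. \<forall>k\<ge>N. T k \<omega> \<le> eps} \<le> pp ^ m" for m
  proof -
    have "prob {\<omega>\<in>space M. \<forall>k\<ge>N. T k \<omega> \<le> eps} \<le> prob {\<omega>\<in>space M. \<forall>k\<in>{N..<N+m}. T k \<omega> \<le> eps}"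
      by (rule finite_measure_mono) auto
    then show ?thesis by (simp add: block_le)
  qed
  have "(\<lambda>m. pp ^ m) \<longlonglongrightarrow> 0" using pp_lt1 pp_ge0 by (intro LIMSEQ_power_zero) auto
  then have "prob {\<omega>\<in>space M. \<forall>k\<ge>N. T k \<omega> \<le> eps} \<le> 0"
    using le by (intro LIMSEQ_le_const) auto
  then show ?thesis using measure_nonneg[of M] by (simp add: order_antisym)
qed

lemma AE_inf: "AE \<omega> in M. infinite (cl_gaps eps (sq \<omega>))"
proof -
  have "AE \<omega> in M. \<exists>k\<ge>N. eps < T k \<omega>" for N
  proof (subst AE_iff_measurable[OF _ refl])
    show "{x \<in> space M. \<not> (\<exists>k\<ge>N. eps < T k x)} \<in> sets M" by measurable
    have "{x \<in> space M. \<not> (\<exists>k\<ge>N. eps < T k x)} = {\<omega>\<in>space M. \<forall>k\<ge>N. T k \<omega> \<le> eps}"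
      by (auto simp: not_less)
    then show "emeasure M {x \<in> space M. \<not> (\<exists>k\<ge>N. eps < T k x)} = 0"
      using tail_null[of N] by (simp add: emeasure_eq_measure)
  qed
  then have "AE \<omega> in M. \<forall>N. \<exists>k\<ge>N. eps < T k \<omega>" by (simp add: AE_all_countable)
  then show ?thesis
  proof (rule AE_mp, intro AE_I2 impI)
    fix \<omega> assume h: "\<forall>N. \<exists>k\<ge>N. eps < T k \<omega>"
    show "infinite (cl_gaps eps (sq \<omega>))"
      unfolding cl_gaps_eq infinite_nat_iff_unbounded_le
    proof
      fix m obtain k where "k \<ge> max 1 m" "eps < T k \<omega>" using h by blast
      then show "\<exists>n\<ge>m. n \<in> {k. 1 \<le> k \<and> eps < T k \<omega>}" by auto
    qed
  qed
qed

end

lemma Lst_char: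
  assumes l: "1 \<le> l"
  shows "((\<forall>k\<in>{1..<l}. t k \<le> eps) \<and> eps < t l) \<longleftrightarrow> (cl_gaps eps t \<noteq> {} \<and> enumerate (cl_gaps eps t) 0 = l)"
proof
  assume h: "(\<forall>k\<in>{1..<l}. t k \<le> eps) \<and> eps < t l"
  then have lin: "l \<in> cl_gaps eps t" using l by (simp add: cl_gaps_eq)
  have "(LEAST k. k \<in> cl_gaps eps t) = l"
  proof (rule Least_equality)
    show "l \<in> cl_gaps eps t" by fact
    fix y assume "y \<in> cl_gaps eps t"
    then have y: "1 \<le> y" "eps < t y" by (simp_all add: cl_gaps_eq)
    show "l \<le> y"
    proof (rule ccontr)
      assume "\<not> l \<le> y"
      then have "y \<in> {1..<l}" using y by auto
      then have "t y \<le> eps" using h by blast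
      then show False using y by simp
    qed
  qed
  then show "cl_gaps eps t \<noteq> {} \<and> enumerate (cl_gaps eps t) 0 = l" using lin by (auto simp: enumerate_0)
next
  assume h: "cl_gaps eps t \<noteq> {} \<and> enumerate (cl_gaps eps t) 0 = l"
  then have lin: "l \<in> cl_gaps eps t" unfolding enumerate_0 by (auto intro: LeastI)
  have "\<forall>k\<in>{1..<l}. t k \<le> eps"
  proof (rule ccontr)
    assume "\<not> (\<forall>k\<in>{1..<l}. t k \<le> eps)"
    then obtain k where k: "k \<in> {1..<l}" "eps < t k" by (auto simp: not_le)
    then have "k \<in> cl_gaps eps t" by (simp add: cl_gaps_eq)
    then have "l \<le> k" using h unfolding enumerate_0 by (auto intro: Least_le)
    then show False using k by auto
  qed
  then show "(\<forall>k\<in>{1..<l}. t k \<le> eps) \<and> eps < t l" using lin by (simp add: cl_gaps_eq)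
qed

definition shl :: "nat \<Rightarrow> (nat \<Rightarrow> real) \<Rightarrow> nat \<Rightarrow> real" where
  "shl l t = (\<lambda>k. if k = 0 then t 0 else t (l + k))"

lemma shft_shl: "shft eps t = shl (enumerate (cl_gaps eps t) 0) t"
  by (simp add: shft_def shl_def)

context clus
begin

definition "aa n S = prob {\<omega>\<in>space M. (\<forall>k\<in>{1..<Suc n}. T k \<omega> \<le> eps) \<and> eps + (\<Sum>k\<in>{1..<Suc n}. T k \<omega>) \<in> S}"
definition "gam R = prob {\<omega>\<in>space M. eps < T 0 \<omega> \<and> T 0 \<omega> - eps \<in> R}"

lemma blk_prob:
  assumes l: "1 \<le> l" and S: "S \<in> sets borel" and R: "R \<in> sets borel"
  shows "prob {\<omega>\<in>space M. (\<forall>k\<in>{1..<l}. T k \<omega> \<le> eps) \<and> eps + (\<Sum>k\<in>{1..<l}. T k \<omega>) \<in> S \<and> eps < T l \<omega> \<and> T l \<omega> - eps \<in> R}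
     = prob {\<omega>\<in>space M. (\<forall>k\<in>{1..<l}. T k \<omega> \<le> eps) \<and> eps + (\<Sum>k\<in>{1..<l}. T k \<omega>) \<in> S} * gam R"
proof -
  note [measurable] = S R
  define P1 where "P1 = {x\<in>space (PiM {1..<l} (\<lambda>_. borel :: real measure)). (\<forall>k\<in>{1..<l}. x k \<le> eps) \<and> eps + (\<Sum>k\<in>{1..<l}. x k) \<in> S}"
  define P2 where "P2 = {x\<in>space (PiM {l} (\<lambda>_. borel :: real measure)). eps < x l \<and> x l - eps \<in> R}"
  have P1m: "P1 \<in> sets (PiM {1..<l} (\<lambda>_. borel))" unfolding P1_def by measurable
  have P2m: "P2 \<in> sets (PiM {l} (\<lambda>_. borel))" unfolding P2_def by measurable
  have "prob {\<omega>\<in>space M. restrict (sq \<omega>) {1..<l} \<in> P1 \<and> restrict (sq \<omega>) {l} \<in> P2}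
     = prob {\<omega>\<in>space M. restrict (sq \<omega>) {1..<l} \<in> P1} * prob {\<omega>\<in>space M. restrict (sq \<omega>) {l} \<in> P2}"
    by (rule ind2[OF _ P1m P2m]) auto
  moreover have "{\<omega>\<in>space M. restrict (sq \<omega>) {1..<l} \<in> P1 \<and> restrict (sq \<omega>) {l} \<in> P2}
    = {\<omega>\<in>space M. (\<forall>k\<in>{1..<l}. T k \<omega> \<le> eps) \<and> eps + (\<Sum>k\<in>{1..<l}. T k \<omega>) \<in> S \<and> eps < T l \<omega> \<and> T l \<omega> - eps \<in> R}"
    by (auto simp: P1_def P2_def space_PiM)
  moreover have "{\<omega>\<in>space M. restrict (sq \<omega>) {1..<l} \<in> P1}
    = {\<omega>\<in>space M. (\<forall>k\<in>{1..<l}. T k \<omega> \<le> eps) \<and> eps + (\<Sum>k\<in>{1..<l}. T k \<omega>) \<in> S}"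
    by (auto simp: P1_def space_PiM)
  moreover have "prob {\<omega>\<in>space M. restrict (sq \<omega>) {l} \<in> P2} = gam R"
  proof -
    have "{\<omega>\<in>space M. restrict (sq \<omega>) {l} \<in> P2} = {\<omega>\<in>space M. T l \<omega> \<in> {x. eps < x \<and> x - eps \<in> R}}"
      by (auto simp: P2_def space_PiM)
    also have "prob \<dots> = prob {\<omega>\<in>space M. T 0 \<omega> \<in> {x. eps < x \<and> x - eps \<in> R}}"
      by (intro prob_T) measurable
    finally show ?thesis by (simp add: gam_def)
  qed
  ultimately show ?thesis by simp
qed

end

lemma shl_meas:
  fixes K :: "nat set"
  assumes K: "0 \<in> K" "\<And>k. 1 \<le> k \<Longrightarrow> l + k \<in> K"
  shows "shl l \<in> measurable (PiM K (\<lambda>_. borel :: real measure)) SQ"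
proof -
  have "(\<lambda>x. shl l x k) \<in> borel_measurable (PiM K (\<lambda>_. borel))" for k
  proof (cases "k = 0")
    case True then show ?thesis using K by (simp add: shl_def)
  next
    case False then show ?thesis using K(2)[of k] by (simp add: shl_def)
  qed
  then have "(\<lambda>x k. shl l x k) \<in> measurable (PiM K (\<lambda>_. borel)) SQ"
    by (intro measurable_PiM_single') auto
  then show ?thesis by (simp add: fun_eq_iff)
qed

context clus
begin

lemma meas_shl_sq: "(\<lambda>\<omega>. shl l (sq \<omega>)) \<in> measurable M SQ"
  by (rule measurable_compose[OF sq_meas shl_meas]) auto

lemma U_prob:
  assumes S: "S \<in> sets borel" and R: "R \<in> sets borel" and F: "F \<in> sets SQ"
  shows "prob {\<omega>\<in>space M. ((\<forall>k\<in>{1..<Suc n}. T k \<omega> \<le> eps) \<and> eps + (\<Sum>k\<in>{1..<Suc n}. T k \<omega>) \<in> S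
      \<and> eps < T (Suc n) \<omega> \<and> T (Suc n) \<omega> - eps \<in> R) \<and> shl (Suc n) (sq \<omega>) \<in> F}
    = aa n S * gam R * prob {\<omega>\<in>space M. sq \<omega> \<in> F}"
proof -
  note [measurable] = S R F
  define l where "l = Suc n"
  define K1 where "K1 = {1..l}"
  define K2 where "K2 = - {1..l}"
  define P1 where "P1 = {x\<in>space (PiM K1 (\<lambda>_. borel :: real measure)). (\<forall>k\<in>{1..<l}. x k \<le> eps) \<and> eps + (\<Sum>k\<in>{1..<l}. x k) \<in> S
      \<and> eps < x l \<and> x l - eps \<in> R}"
  define P2 where "P2 = shl l -` F \<inter> space (PiM K2 (\<lambda>_. borel :: real measure))"
  have lK1: "l \<in> K1" and sK1: "{1..<l} \<subseteq> K1" unfolding K1_def l_def by auto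
  have P1m: "P1 \<in> sets (PiM K1 (\<lambda>_. borel))" unfolding P1_def K1_def l_def by measurable
  have P2m: "P2 \<in> sets (PiM K2 (\<lambda>_. borel))" unfolding P2_def
    by (rule measurable_sets[OF shl_meas F]) (auto simp: K2_def)
  have "prob {\<omega>\<in>space M. restrict (sq \<omega>) K1 \<in> P1 \<and> restrict (sq \<omega>) K2 \<in> P2}
     = prob {\<omega>\<in>space M. restrict (sq \<omega>) K1 \<in> P1} * prob {\<omega>\<in>space M. restrict (sq \<omega>) K2 \<in> P2}"
    by (rule ind2[OF _ P1m P2m]) (auto simp: K1_def K2_def)
  moreover have "restrict (sq \<omega>) K1 \<in> P1 \<longleftrightarrow> ((\<forall>k\<in>{1..<l}. T k \<omega> \<le> eps) \<and> eps + (\<Sum>k\<in>{1..<l}. T k \<omega>) \<in> S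
      \<and> eps < T l \<omega> \<and> T l \<omega> - eps \<in> R)" for \<omega>
    using lK1 sK1 by (auto simp: P1_def space_PiM subset_iff)
  moreover have "restrict (sq \<omega>) K2 \<in> P2 \<longleftrightarrow> shl l (sq \<omega>) \<in> F" for \<omega>
  proof -
    have "shl l (restrict (sq \<omega>) K2) = shl l (sq \<omega>)"
      by (auto simp: shl_def K2_def fun_eq_iff)
    then show ?thesis by (auto simp: P2_def space_PiM)
  qed
  moreover have "prob {\<omega>\<in>space M. shl l (sq \<omega>) \<in> F} = prob {\<omega>\<in>space M. sq \<omega> \<in> F}"
  proof -
    define f where "f k = (if k = 0 then 0 else l + k)" for k
    have "inj f" unfolding f_def inj_def by auto
    have "shl l (sq \<omega>) = (\<lambda>k. T (f k) \<omega>)" for \<omega> by (auto simp: shl_def f_def fun_eq_iff)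
    then show ?thesis using prob_inj[OF \<open>inj f\<close> F] by simp
  qed
  moreover have "prob {\<omega>\<in>space M. (\<forall>k\<in>{1..<l}. T k \<omega> \<le> eps) \<and> eps + (\<Sum>k\<in>{1..<l}. T k \<omega>) \<in> S
      \<and> eps < T l \<omega> \<and> T l \<omega> - eps \<in> R} = aa n S * gam R"
    using blk_prob[OF _ S R, of l] by (simp add: aa_def l_def)
  ultimately show ?thesis unfolding l_def[symmetric] by simp
qed

definition "EV S R F = {\<omega>\<in>space M. cl_B eps (sq \<omega>) 1 \<in> S \<and> cl_D eps (sq \<omega>) 1 \<in> R \<and> shft eps (sq \<omega>) \<in> F}"

lemma sm_sums:
  assumes S: "S \<in> sets borel" and R: "R \<in> sets borel" and F: "F \<in> sets SQ"
  shows "(\<lambda>n. aa n S * gam R * prob {\<omega>\<in>space M. sq \<omega> \<in> F}) sums prob (EV S R F)"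
proof -
  note [measurable] = S R F
  define U where "U n = {\<omega>\<in>space M. ((\<forall>k\<in>{1..<Suc n}. T k \<omega> \<le> eps) \<and> eps + (\<Sum>k\<in>{1..<Suc n}. T k \<omega>) \<in> S
      \<and> eps < T (Suc n) \<omega> \<and> T (Suc n) \<omega> - eps \<in> R) \<and> shl (Suc n) (sq \<omega>) \<in> F}" for n
  have Um: "U n \<in> sets M" for n
  proof -
    have [measurable]: "(\<lambda>\<omega>. shl (Suc n) (sq \<omega>)) \<in> measurable M SQ" by (rule meas_shl_sq)
    show ?thesis unfolding U_def by measurable
  qed
  have EVm: "EV S R F \<in> sets M"
  proof -
    have [measurable]: "(\<lambda>\<omega>. cl_B eps (sq \<omega>) 1) \<in> borel_measurable M"
      "(\<lambda>\<omega>. cl_D eps (sq \<omega>) 1) \<in> borel_measurable M"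
      "(\<lambda>\<omega>. shft eps (sq \<omega>)) \<in> measurable M SQ"
      by (rule meas_B meas_D meas_shft, simp)+
    show ?thesis unfolding EV_def by measurable
  qed
  have key: "\<omega> \<in> U n \<longleftrightarrow> \<omega> \<in> space M \<and> cl_gaps eps (sq \<omega>) \<noteq> {} \<and> enumerate (cl_gaps eps (sq \<omega>)) 0 = Suc n
      \<and> cl_B eps (sq \<omega>) 1 \<in> S \<and> cl_D eps (sq \<omega>) 1 \<in> R \<and> shft eps (sq \<omega>) \<in> F" for \<omega> n
  proof -
    have iff: "cl_gaps eps (sq \<omega>) \<noteq> {} \<and> enumerate (cl_gaps eps (sq \<omega>)) 0 = Suc n \<longleftrightarrow>
       (\<forall>k\<in>{1..<Suc n}. T k \<omega> \<le> eps) \<and> eps < T (Suc n) \<omega>"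
      using Lst_char[of "Suc n" "sq \<omega>" eps] by simp
    show ?thesis
    proof (cases "cl_gaps eps (sq \<omega>) \<noteq> {} \<and> enumerate (cl_gaps eps (sq \<omega>)) 0 = Suc n")
      case True
      then have "cl_B eps (sq \<omega>) 1 = eps + (\<Sum>k\<in>{1..<Suc n}. T k \<omega>)"
        "cl_D eps (sq \<omega>) 1 = T (Suc n) \<omega> - eps" "shft eps (sq \<omega>) = shl (Suc n) (sq \<omega>)"
        using first_cluster[of eps "sq \<omega>"] shft_shl[of eps "sq \<omega>"] by auto
      then show ?thesis using True iff unfolding U_def by auto
    next
      case False
      then show ?thesis using iff unfolding U_def by auto
    qed
  qed
  have disj: "disjoint_family U"
    unfolding disjoint_family_on_def using key by auto
  have "(\<lambda>n. prob (U n)) sums prob (\<Union>n. U n)"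
    using Um disj by (intro finite_measure_UNION) auto
  moreover have "prob (\<Union>n. U n) = prob (EV S R F)"
  proof (rule measure_eq_AE)
    show "AE x in M. (x \<in> (\<Union>n. U n)) = (x \<in> EV S R F)"
    proof (rule AE_mp[OF AE_inf], intro AE_I2 impI)
      fix \<omega> assume \<omega>: "\<omega> \<in> space M" and inf: "infinite (cl_gaps eps (sq \<omega>))"
      then have ne: "cl_gaps eps (sq \<omega>) \<noteq> {}" by auto
      obtain n where n: "enumerate (cl_gaps eps (sq \<omega>)) 0 = Suc n"
        using Lst_ge1[OF inf, of 0] by (cases "enumerate (cl_gaps eps (sq \<omega>)) 0") auto
      show "(\<omega> \<in> (\<Union>n. U n)) = (\<omega> \<in> EV S R F)"
        using key[of \<omega>] ne n \<omega> unfolding EV_def by auto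
    qed
    show "(\<Union>n. U n) \<in> sets M" using Um by auto
    show "EV S R F \<in> sets M" by (rule EVm)
  qed
  moreover have "prob (U n) = aa n S * gam R * prob {\<omega>\<in>space M. sq \<omega> \<in> F}" for n
    unfolding U_def by (rule U_prob[OF S R F])
  ultimately show ?thesis by simp
qed

end

lemma space_SQ: "space SQ = UNIV"
  by (auto simp: space_PiM)

context clus
begin

definition "sig S = (\<Sum>n. aa n S)"

lemma gam_pos: "gam UNIV > 0"
  using pos by (simp add: gam_def)

lemma prob_sq_space: "prob {\<omega>\<in>space M. sq \<omega> \<in> space SQ} = 1"
  by (simp add: space_SQ prob_space)

lemma summ_aa:
  assumes S: "S \<in> sets borel"
  shows "summable (\<lambda>n. aa n S)"
proof -
  have "summable (\<lambda>n. aa n S * gam UNIV * 1)"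
    using sm_sums[OF S _ sets.top[of SQ]] prob_sq_space by (auto simp: sums_iff)
  then have "summable (\<lambda>n. (aa n S * gam UNIV) / gam UNIV)"
    by (intro summable_divide) simp
  then show ?thesis using gam_pos by simp
qed

lemma sm:
  assumes S: "S \<in> sets borel" and R: "R \<in> sets borel" and F: "F \<in> sets SQ"
  shows "prob (EV S R F) = sig S * gam R * prob {\<omega>\<in>space M. sq \<omega> \<in> F}"
proof -
  have "(\<lambda>n. aa n S * (gam R * prob {\<omega>\<in>space M. sq \<omega> \<in> F})) sums (sig S * (gam R * prob {\<omega>\<in>space M. sq \<omega> \<in> F}))"
    unfolding sig_def by (intro sums_mult2 summable_sums summ_aa S)
  with sm_sums[OF S R F] show ?thesis by (simp add: sums_iff mult.assoc)
qed

lemma one_UU: "sig UNIV * gam UNIV = 1"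
proof -
  have "EV UNIV UNIV (space SQ) = space M" by (auto simp: EV_def space_SQ)
  then show ?thesis using sm[of UNIV UNIV "space SQ"] prob_sq_space by (simp add: prob_space)
qed

definition "QE n S R = {\<omega>\<in>space M. \<forall>j\<in>{1..n}. cl_B eps (sq \<omega>) j \<in> S j \<and> cl_D eps (sq \<omega>) j \<in> R j}"
definition "QF n S R = {t\<in>space SQ. \<forall>j\<in>{1..n}. cl_B eps t j \<in> S j \<and> cl_D eps t j \<in> R j}"

lemma QF_sets:
  assumes S: "\<And>j. S j \<in> sets borel" and R: "\<And>j. R j \<in> sets borel"
  shows "QF n S R \<in> sets SQ"
proof -
  have [measurable]: "(\<lambda>t. cl_B eps t j) \<in> borel_measurable SQ" "(\<lambda>t. cl_D eps t j) \<in> borel_measurable SQ" for j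
    using meas_B[where N=SQ and t="\<lambda>x. x"] meas_D[where N=SQ and t="\<lambda>x. x"] by auto
  note [measurable] = S R
  show ?thesis unfolding QF_def by measurable
qed

lemma QE_sets:
  assumes S: "\<And>j. S j \<in> sets borel" and R: "\<And>j. R j \<in> sets borel"
  shows "QE n S R \<in> sets M"
proof -
  have "QE n S R = (\<lambda>\<omega>. sq \<omega>) -` QF n S R \<inter> space M"
    by (auto simp: QE_def QF_def space_SQ)
  then show ?thesis using measurable_sets[OF sq_meas QF_sets[OF S R]] by simp
qed

lemma QQ:
  assumes S: "\<And>j. S j \<in> sets borel" and R: "\<And>j. R j \<in> sets borel"
  shows "prob (QE n S R) = (\<Prod>j\<in>{1..n}. sig (S j) * gam (R j))"
  using S R
proof (induction n arbitrary: S R)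
  case 0
  have "QE 0 S R = space M" by (auto simp: QE_def)
  then show ?case by (simp add: prob_space)
next
  case (Suc n)
  define S' where "S' j = S (Suc j)" for j
  define R' where "R' j = R (Suc j)" for j
  have S': "\<And>j. S' j \<in> sets borel" and R': "\<And>j. R' j \<in> sets borel"
    using Suc.prems by (auto simp: S'_def R'_def)
  have "prob (QE (Suc n) S R) = prob (EV (S 1) (R 1) (QF n S' R'))"
  proof (rule measure_eq_AE)
    show "AE x in M. (x \<in> QE (Suc n) S R) = (x \<in> EV (S 1) (R 1) (QF n S' R'))"
    proof (rule AE_mp[OF AE_inf], intro AE_I2 impI)
      fix \<omega> assume \<omega>: "\<omega> \<in> space M" and inf: "infinite (cl_gaps eps (sq \<omega>))"
      have "(\<forall>j\<in>{1..Suc n}. cl_B eps (sq \<omega>) j \<in> S j \<and> cl_D eps (sq \<omega>) j \<in> R j)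
        \<longleftrightarrow> (cl_B eps (sq \<omega>) 1 \<in> S 1 \<and> cl_D eps (sq \<omega>) 1 \<in> R 1) \<and>
            (\<forall>j\<in>{1..n}. cl_B eps (sq \<omega>) (Suc j) \<in> S (Suc j) \<and> cl_D eps (sq \<omega>) (Suc j) \<in> R (Suc j))"
        (is "?L \<longleftrightarrow> ?A \<and> ?B")
      proof
        assume ?L then show "?A \<and> ?B" by auto
      next
        assume h: "?A \<and> ?B"
        show ?L
        proof
          fix j assume j: "j \<in> {1..Suc n}"
          show "cl_B eps (sq \<omega>) j \<in> S j \<and> cl_D eps (sq \<omega>) j \<in> R j"
          proof (cases j)
            case 0 then show ?thesis using j by simp
          next
            case (Suc i) then show ?thesis using h j by (cases "i = 0") auto
          qed
        qed
      qed
      moreover have "\<And>j. j \<in> {1..n} \<Longrightarrow> cl_B eps (sq \<omega>) (Suc j) = cl_B eps (shft eps (sq \<omega>)) j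
          \<and> cl_D eps (sq \<omega>) (Suc j) = cl_D eps (shft eps (sq \<omega>)) j"
        using B_shft[OF inf] D_shft[OF inf] by auto
      ultimately show "(\<omega> \<in> QE (Suc n) S R) = (\<omega> \<in> EV (S 1) (R 1) (QF n S' R'))"
        using \<omega> by (auto simp: QE_def EV_def QF_def S'_def R'_def space_SQ)
    qed
    show "QE (Suc n) S R \<in> sets M" by (rule QE_sets) (use Suc.prems in auto)
    show "EV (S 1) (R 1) (QF n S' R') \<in> sets M"
    proof -
      have [measurable]: "(\<lambda>\<omega>. cl_B eps (sq \<omega>) 1) \<in> borel_measurable M"
        "(\<lambda>\<omega>. cl_D eps (sq \<omega>) 1) \<in> borel_measurable M"
        "(\<lambda>\<omega>. shft eps (sq \<omega>)) \<in> measurable M SQ"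
        by (rule meas_B meas_D meas_shft, simp)+
      note [measurable] = Suc.prems QF_sets[OF S' R', of n]
      show ?thesis unfolding EV_def by measurable
    qed
  qed
  also have "\<dots> = sig (S 1) * gam (R 1) * prob {\<omega>\<in>space M. sq \<omega> \<in> QF n S' R'}"
    by (rule sm) (use Suc.prems QF_sets[OF S' R'] in auto)
  also have "{\<omega>\<in>space M. sq \<omega> \<in> QF n S' R'} = QE n S' R'"
    by (auto simp: QE_def QF_def space_SQ)
  also have "prob (QE n S' R') = (\<Prod>j\<in>{1..n}. sig (S' j) * gam (R' j))"
    by (rule Suc.IH[OF S' R'])
  also have "sig (S 1) * gam (R 1) * (\<Prod>j\<in>{1..n}. sig (S' j) * gam (R' j))
      = (\<Prod>j\<in>{1..Suc n}. sig (S j) * gam (R j))"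
    by (simp add: S'_def R'_def prod.atLeast_Suc_atMost prod.shift_bounds_cl_Suc_ivl del: prod.cl_ivl_Suc)
  finally show ?case .
qed

end

context clus
begin

lemma marg_B:
  assumes j: "1 \<le> j" and A: "A \<in> sets borel"
  shows "prob {\<omega>\<in>space M. cl_B eps (sq \<omega>) j \<in> A} = sig A * gam UNIV"
proof -
  define S where "S i = (if i = j then A else UNIV)" for i
  have S: "\<And>i. S i \<in> sets borel" using A by (simp add: S_def)
  have "QE j S (\<lambda>_. UNIV) = {\<omega>\<in>space M. cl_B eps (sq \<omega>) j \<in> A}"
    using j by (auto simp: QE_def S_def)
  moreover have "(\<Prod>i\<in>{1..j}. sig (S i) * gam UNIV) = (\<Prod>i\<in>{1..j}. if i = j then sig A * gam UNIV else 1)"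
    by (rule prod.cong) (auto simp: S_def one_UU)
  ultimately show ?thesis using QQ[where S=S and R="\<lambda>_. UNIV" and n=j] S j by (simp add: prod.delta)
qed

lemma marg_D:
  assumes j: "1 \<le> j" and A: "A \<in> sets borel"
  shows "prob {\<omega>\<in>space M. cl_D eps (sq \<omega>) j \<in> A} = sig UNIV * gam A"
proof -
  define R where "R i = (if i = j then A else UNIV)" for i
  have R: "\<And>i. R i \<in> sets borel" using A by (simp add: R_def)
  have "QE j (\<lambda>_. UNIV) R = {\<omega>\<in>space M. cl_D eps (sq \<omega>) j \<in> A}"
    using j by (auto simp: QE_def R_def)
  moreover have "(\<Prod>i\<in>{1..j}. sig UNIV * gam (R i)) = (\<Prod>i\<in>{1..j}. if i = j then sig UNIV * gam A else 1)"
    by (rule prod.cong) (auto simp: R_def one_UU)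
  ultimately show ?thesis using QQ[where S="\<lambda>_. UNIV" and R=R and n=j] R j by (simp add: prod.delta)
qed

lemma B_meas: "(\<lambda>\<omega>. cl_B eps (sq \<omega>) j) \<in> borel_measurable M"
  by (rule meas_B) simp
lemma D_meas: "(\<lambda>\<omega>. cl_D eps (sq \<omega>) j) \<in> borel_measurable M"
  by (rule meas_D) simp

lemma distr_B:
  assumes j: "1 \<le> j"
  shows "distr M borel (\<lambda>\<omega>. cl_B eps (sq \<omega>) j) = distr M borel (\<lambda>\<omega>. cl_B eps (sq \<omega>) 1)"
proof (rule measure_eqI)
  fix A :: "real set" assume A: "A \<in> sets (distr M borel (\<lambda>\<omega>. cl_B eps (sq \<omega>) j))"
  then have A': "A \<in> sets borel" by simp
  have "emeasure (distr M borel (\<lambda>\<omega>. cl_B eps (sq \<omega>) j)) A = prob {\<omega>\<in>space M. cl_B eps (sq \<omega>) j \<in> A}"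
    using A' B_meas by (simp add: emeasure_distr emeasure_eq_measure vimage_def Int_def conj_commute)
  also have "\<dots> = prob {\<omega>\<in>space M. cl_B eps (sq \<omega>) 1 \<in> A}"
    using marg_B[OF j A'] marg_B[OF _ A', of 1] by simp
  also have "\<dots> = emeasure (distr M borel (\<lambda>\<omega>. cl_B eps (sq \<omega>) 1)) A"
    using A' B_meas by (simp add: emeasure_distr emeasure_eq_measure vimage_def Int_def conj_commute)
  finally show "emeasure (distr M borel (\<lambda>\<omega>. cl_B eps (sq \<omega>) j)) A = emeasure (distr M borel (\<lambda>\<omega>. cl_B eps (sq \<omega>) 1)) A" .
qed simp

end

context clus
begin

definition "XX j \<omega> = (case j of Inl i \<Rightarrow> cl_B eps (sq \<omega>) i | Inr i \<Rightarrow> cl_D eps (sq \<omega>) i)"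

lemma XX_meas: "XX j \<in> borel_measurable M"
proof (cases j)
  case (Inl a)
  then have "XX j = (\<lambda>\<omega>. cl_B eps (sq \<omega>) a)" by (simp add: XX_def fun_eq_iff)
  then show ?thesis using B_meas by simp
next
  case (Inr a)
  then have "XX j = (\<lambda>\<omega>. cl_D eps (sq \<omega>) a)" by (simp add: XX_def fun_eq_iff)
  then show ?thesis using D_meas by simp
qed

definition "idx x = (case x of Inl i \<Rightarrow> i | Inr i \<Rightarrow> (i::nat))"

lemma indep_XX:
  "indep_vars (\<lambda>_. borel) XX ({Inl i | i. i \<ge> 1} \<union> {Inr i | i. i \<ge> 1})"
  unfolding indep_vars_def2
proof (intro conjI ballI)
  fix j show "random_variable borel (XX j)" by (rule XX_meas)
next
  let ?I = "{Inl i | i. i \<ge> 1} \<union> {Inr i | i. (i::nat) \<ge> 1}"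
  show "indep_sets (\<lambda>i. {XX i -` A \<inter> space M |A. A \<in> sets borel}) ?I"
    unfolding indep_sets_def
  proof (intro conjI ballI allI impI)
    fix i show "{XX i -` A \<inter> space M |A. A \<in> sets borel} \<subseteq> events"
      using XX_meas by (auto intro: measurable_sets)
  next
    fix J A assume J: "J \<subseteq> ?I" "J \<noteq> {}" "finite J"
      and A: "A \<in> (\<Pi> i\<in>J. {XX i -` A \<inter> space M |A. A \<in> sets borel})"
    have "\<forall>x\<in>J. \<exists>B. B \<in> sets borel \<and> A x = XX x -` B \<inter> space M" using A by blast
    then obtain B where B: "\<And>x. x \<in> J \<Longrightarrow> B x \<in> sets borel \<and> A x = XX x -` B x \<inter> space M"
      by metis
    define n where "n = Max (idx ` J)"
    have idx: "\<And>x. x \<in> J \<Longrightarrow> 1 \<le> idx x \<and> idx x \<le> n"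
      using J unfolding n_def by (auto simp: idx_def intro: Max_ge)
    define S where "S i = (if Inl i \<in> J then B (Inl i) else UNIV)" for i
    define R where "R i = (if Inr i \<in> J then B (Inr i) else UNIV)" for i
    have S: "\<And>i. S i \<in> sets borel" and R: "\<And>i. R i \<in> sets borel"
      using B by (auto simp: S_def R_def)
    have inter: "(\<Inter>x\<in>J. A x) = QE n S R"
    proof (intro equalityI subsetI)
      fix \<omega> assume \<omega>: "\<omega> \<in> (\<Inter>x\<in>J. A x)"
      then have sp: "\<omega> \<in> space M" using J B by auto
      have h: "\<And>x. x \<in> J \<Longrightarrow> XX x \<omega> \<in> B x" using \<omega> B by blast
      have h1: "\<And>j. Inl j \<in> J \<Longrightarrow> cl_B eps (sq \<omega>) j \<in> B (Inl j)"
        using h by (force simp: XX_def)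
      have h2: "\<And>j. Inr j \<in> J \<Longrightarrow> cl_D eps (sq \<omega>) j \<in> B (Inr j)"
        using h by (force simp: XX_def)
      show "\<omega> \<in> QE n S R" unfolding QE_def using sp h1 h2 by (auto simp: S_def R_def)
    next
      fix \<omega> assume \<omega>: "\<omega> \<in> QE n S R"
      show "\<omega> \<in> (\<Inter>x\<in>J. A x)"
      proof
        fix x assume x: "x \<in> J"
        show "\<omega> \<in> A x"
        proof (cases x)
          case (Inl i)
          then have "i \<in> {1..n}" using idx[OF x] by (simp add: idx_def)
          then have "cl_B eps (sq \<omega>) i \<in> S i" "\<omega> \<in> space M" using \<omega> unfolding QE_def by blast+
          then show ?thesis using x B[OF x] Inl by (auto simp: S_def XX_def)
        next
          case (Inr i)
          then have "i \<in> {1..n}" using idx[OF x] by (simp add: idx_def)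
          then have "cl_D eps (sq \<omega>) i \<in> R i" "\<omega> \<in> space M" using \<omega> unfolding QE_def by blast+
          then show ?thesis using x B[OF x] Inr by (auto simp: R_def XX_def)
        qed
      qed
    qed
    define p where "p x = (case x of Inl i \<Rightarrow> sig (S i) * gam UNIV | Inr i \<Rightarrow> sig UNIV * gam (R i))" for x
    define W where "W = Inl ` {1..n} \<union> Inr ` {1..n}"
    have JW: "J \<subseteq> W"
    proof
      fix x assume x: "x \<in> J" then show "x \<in> W"
        using idx[OF x] by (cases x) (auto simp: W_def idx_def)
    qed
    have pA: "prob (A x) = p x" if x: "x \<in> J" for x
    proof (cases x)
      case (Inl i)
      have "A x = {\<omega>\<in>space M. cl_B eps (sq \<omega>) i \<in> B x}" using B[OF x] Inl by (auto simp: XX_def)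
      then show ?thesis using marg_B[of i "B x"] B[OF x] idx[OF x] Inl x
        by (simp add: p_def S_def idx_def)
    next
      case (Inr i)
      have "A x = {\<omega>\<in>space M. cl_D eps (sq \<omega>) i \<in> B x}" using B[OF x] Inr by (auto simp: XX_def)
      then show ?thesis using marg_D[of i "B x"] B[OF x] idx[OF x] Inr x
        by (simp add: p_def R_def idx_def)
    qed
    have "(\<Prod>x\<in>J. prob (A x)) = (\<Prod>x\<in>J. p x)" using pA by simp
    also have "\<dots> = (\<Prod>x\<in>W. p x)"
    proof (rule prod.mono_neutral_left)
      show "finite W" by (simp add: W_def)
      show "J \<subseteq> W" by fact
      show "\<forall>x\<in>W - J. p x = 1"
      proof
        fix x assume "x \<in> W - J" then show "p x = 1"
          using one_UU by (cases x) (auto simp: p_def S_def R_def mult.commute)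
      qed
    qed
    also have "\<dots> = (\<Prod>x\<in>Inl ` {1..n}. p x) * (\<Prod>x\<in>Inr ` {1..n}. p x)"
      unfolding W_def by (rule prod.union_disjoint) auto
    also have "\<dots> = (\<Prod>i\<in>{1..n}. sig (S i) * gam UNIV) * (\<Prod>i\<in>{1..n}. sig UNIV * gam (R i))"
      by (simp add: prod.reindex p_def)
    also have "\<dots> = (\<Prod>i\<in>{1..n}. sig (S i) * gam (R i) * (sig UNIV * gam UNIV))"
      by (simp add: prod.distrib[symmetric] mult_ac)
    also have "\<dots> = prob (QE n S R)"
      using QQ[OF S R, of n] by (simp add: one_UU)
    finally show "prob (\<Inter>j\<in>J. A j) = (\<Prod>j\<in>J. prob (A j))" using inter by simp
  qed
qed

end

lemma memo:
  assumes lam: "lam > 0" and eps: "eps > 0" and R: "R \<in> sets borel"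
  shows "emeasure (density lborel (\<lambda>x. ennreal (exponential_density lam x))) {x. eps < x \<and> x - eps \<in> R}
       = ennreal (exp (- eps * lam)) * emeasure (density lborel (\<lambda>x. ennreal (exponential_density lam x))) R"
proof -
  note [measurable] = R
  let ?f = "\<lambda>x. ennreal (exponential_density lam x)"
  have fm[measurable]: "?f \<in> borel_measurable borel" by (simp add: exponential_density_def)
  have Am: "{x. eps < x \<and> x - eps \<in> R} \<in> sets borel" by measurable
  have "emeasure (density lborel ?f) {x. eps < x \<and> x - eps \<in> R}
      = (\<integral>\<^sup>+x. ?f x * indicator {x. eps < x \<and> x - eps \<in> R} x \<partial>lborel)"
    using Am by (subst emeasure_density) auto
  also have "\<dots> = \<bar>1::real\<bar> * (\<integral>\<^sup>+x. ?f (eps + 1 * x) * indicator {x. eps < x \<and> x - eps \<in> R} (eps + 1 * x) \<partial>lborel)"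
    by (rule nn_integral_real_affine) (use Am in auto)
  also have "\<dots> = (\<integral>\<^sup>+x. ennreal (exp (- eps * lam)) * (?f x * indicator R x) \<partial>lborel)"
  proof -
    have "AE x in lborel. ?f (eps + 1 * x) * indicator {x. eps < x \<and> x - eps \<in> R} (eps + 1 * x)
        = ennreal (exp (- eps * lam)) * (?f x * indicator R x)"
    proof (rule AE_mp[OF AE_lborel_singleton[of 0]], intro AE_I2 impI)
      fix x :: real assume x0: "x \<noteq> 0"
      show "?f (eps + 1 * x) * indicator {x. eps < x \<and> x - eps \<in> R} (eps + 1 * x)
        = ennreal (exp (- eps * lam)) * (?f x * indicator R x)"
      proof (cases "x < 0")
        case True then show ?thesis by (simp add: exponential_density_def indicator_def)
      next
        case False
        then have xp: "x > 0" using x0 by simp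
        have "exponential_density lam (eps + x) = exp (- eps * lam) * exponential_density lam x"
        proof -
          have "exp (- (eps + x) * lam) = exp (- eps * lam) * exp (- x * lam)"
            by (simp add: exp_add[symmetric] algebra_simps)
          then show ?thesis using xp eps by (simp add: exponential_density_def)
        qed
        then show ?thesis using xp lam
          by (simp add: indicator_def ennreal_mult[symmetric] exponential_density_def)
      qed
    qed
    from nn_integral_cong_AE[OF this] show ?thesis by simp
  qed
  also have "\<dots> = ennreal (exp (- eps * lam)) * (\<integral>\<^sup>+x. ?f x * indicator R x \<partial>lborel)"
    by (rule nn_integral_cmult) measurable
  also have "(\<integral>\<^sup>+x. ?f x * indicator R x \<partial>lborel) = emeasure (density lborel ?f) R"
    by (subst emeasure_density) auto
  finally show ?thesis .
qed

theorem corollary1: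
  fixes M :: "'a measure" and T :: "nat \<Rightarrow> 'a \<Rightarrow> real" and lam eps :: real
  assumes "prob_space M"
    and "lam > 0" and "eps > 0"
    and "\<And>k. distributed M lborel (T k) (exponential_density lam)"
    and "prob_space.indep_vars M (\<lambda>_. borel) T UNIV"
  shows "prob_space.indep_vars M (\<lambda>_. borel)
           (\<lambda>j \<omega>. case j of Inl i \<Rightarrow> cl_B eps (\<lambda>k. T k \<omega>) i
                             | Inr i \<Rightarrow> cl_D eps (\<lambda>k. T k \<omega>) i)
           ({Inl i | i. i \<ge> 1} \<union> {Inr i | i. i \<ge> 1})
       \<and> (\<forall>i\<ge>1. distributed M lborel (\<lambda>\<omega>. cl_D eps (\<lambda>k. T k \<omega>) i) (exponential_density lam))
       \<and> (\<forall>i\<ge>1. distr M borel (\<lambda>\<omega>. cl_B eps (\<lambda>k. T k \<omega>) i)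
                 = distr M borel (\<lambda>\<omega>. cl_B eps (\<lambda>k. T k \<omega>) 1))"
proof -
  interpret prob_space M by fact
  note D = assms(4)
  let ?f = "\<lambda>x. ennreal (exponential_density lam x)"
  have dist: "\<And>k. distr M lborel (T k) = density lborel ?f"
    using distributed_distr_eq_density[OF D] by simp
  have Tm: "\<And>k. T k \<in> borel_measurable M"
    using distributed_measurable[OF D] by simp
  have em: "emeasure M {\<omega>\<in>space M. T k \<omega> \<in> A} = emeasure (density lborel ?f) A"
    if A: "A \<in> sets borel" for k A
  proof -
    have "emeasure (distr M lborel (T k)) A = emeasure M (T k -` A \<inter> space M)"
      using A Tm by (intro emeasure_distr) auto
    then show ?thesis using dist[of k] by (simp add: vimage_def Int_def conj_commute)
  qed
  have ident: "distr M borel (T k) = distr M borel (T 0)" for k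
  proof (rule measure_eqI)
    fix A :: "real set" assume "A \<in> sets (distr M borel (T k))"
    then have A: "A \<in> sets borel" by simp
    have "emeasure (distr M borel (T k)) A = emeasure M {\<omega>\<in>space M. T k \<omega> \<in> A}"
      using A Tm by (simp add: emeasure_distr vimage_def Int_def conj_commute)
    also have "\<dots> = emeasure M {\<omega>\<in>space M. T 0 \<omega> \<in> A}" using em[OF A] by simp
    also have "\<dots> = emeasure (distr M borel (T 0)) A"
      using A Tm by (simp add: emeasure_distr vimage_def Int_def conj_commute)
    finally show "emeasure (distr M borel (T k)) A = emeasure (distr M borel (T 0)) A" .
  qed simp
  interpret dens: prob_space "density lborel ?f"
    using prob_space_exponential_density[OF assms(2)] by simp
  have pT: "prob {\<omega>\<in>space M. eps < T 0 \<omega> \<and> T 0 \<omega> - eps \<in> R} = exp (- eps * lam) * prob {\<omega>\<in>space M. T 0 \<omega> \<in> R}"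
    if R: "R \<in> sets borel" for R
  proof -
    note [measurable] = R
    have "ennreal (prob {\<omega>\<in>space M. eps < T 0 \<omega> \<and> T 0 \<omega> - eps \<in> R})
        = emeasure M {\<omega>\<in>space M. T 0 \<omega> \<in> {x. eps < x \<and> x - eps \<in> R}}"
      by (simp add: emeasure_eq_measure)
    also have "\<dots> = emeasure (density lborel ?f) {x. eps < x \<and> x - eps \<in> R}"
      by (rule em) measurable
    also have "\<dots> = ennreal (exp (- eps * lam)) * emeasure (density lborel ?f) R"
      by (rule memo[OF assms(2,3) R])
    also have "\<dots> = ennreal (exp (- eps * lam)) * emeasure M {\<omega>\<in>space M. T 0 \<omega> \<in> R}"
      using em[OF R, of 0] by simp
    also have "\<dots> = ennreal (exp (- eps * lam) * prob {\<omega>\<in>space M. T 0 \<omega> \<in> R})"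
      by (simp add: emeasure_eq_measure ennreal_mult)
    finally show ?thesis by (simp add: ennreal_inj)
  qed
  have pos: "prob {\<omega>\<in>space M. eps < T 0 \<omega>} > 0"
  proof -
    have "prob {\<omega>\<in>space M. eps < T 0 \<omega>} = exp (- eps * lam) * prob {\<omega>\<in>space M. T 0 \<omega> \<in> UNIV}"
      using pT[of UNIV] by simp
    then show ?thesis by (simp add: prob_space)
  qed
  interpret C: clus M T eps
  proof
    show "eps > 0" by (rule assms(3))
    show "\<And>k. distr M borel (T k) = distr M borel (T 0)" by (rule ident)
    show "indep_vars (\<lambda>_. borel) T UNIV" by (rule assms(5))
    show "prob {\<omega>\<in>space M. eps < T 0 \<omega>} > 0" by (rule pos)
  qed
  have gamR: "C.gam R = exp (- eps * lam) * prob {\<omega>\<in>space M. T 0 \<omega> \<in> R}" if "R \<in> sets borel" for R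
    using pT[OF that] by (simp add: C.gam_def)
  have sgD: "C.sig UNIV * C.gam R = prob {\<omega>\<in>space M. T 0 \<omega> \<in> R}" if "R \<in> sets borel" for R
  proof -
    have "C.sig UNIV * exp (- eps * lam) = 1"
      using C.one_UU gamR[of UNIV] by (simp add: prob_space)
    then show ?thesis using gamR[OF that] by (metis mult.assoc mult_1)
  qed
  have XXeq: "(\<lambda>j \<omega>. case j of Inl i \<Rightarrow> cl_B eps (\<lambda>k. T k \<omega>) i | Inr i \<Rightarrow> cl_D eps (\<lambda>k. T k \<omega>) i) = C.XX"
    by (simp add: fun_eq_iff C.XX_def)
  have Ddist: "distributed M lborel (\<lambda>\<omega>. cl_D eps (\<lambda>k. T k \<omega>) i) (exponential_density lam)" if i: "1 \<le> i" for i
    unfolding distributed_def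
  proof (intro conjI)
    show "(\<lambda>\<omega>. cl_D eps (\<lambda>k. T k \<omega>) i) \<in> measurable M lborel" using C.D_meas by simp
    show "(\<lambda>x. ennreal (exponential_density lam x)) \<in> borel_measurable lborel"
      using distributed_borel_measurable[OF D[of 0]] by simp
    show "distr M lborel (\<lambda>\<omega>. cl_D eps (\<lambda>k. T k \<omega>) i) = density lborel (\<lambda>x. ennreal (exponential_density lam x))"
    proof (rule measure_eqI)
      fix A :: "real set" assume "A \<in> sets (distr M lborel (\<lambda>\<omega>. cl_D eps (\<lambda>k. T k \<omega>) i))"
      then have A: "A \<in> sets borel" by simp
      have "emeasure (distr M lborel (\<lambda>\<omega>. cl_D eps (\<lambda>k. T k \<omega>) i)) A
          = emeasure M {\<omega>\<in>space M. cl_D eps (\<lambda>k. T k \<omega>) i \<in> A}"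
        using A C.D_meas by (simp add: emeasure_distr vimage_def Int_def conj_commute)
      also have "\<dots> = ennreal (C.sig UNIV * C.gam A)"
        using C.marg_D[OF i A] by (simp add: emeasure_eq_measure)
      also have "\<dots> = emeasure M {\<omega>\<in>space M. T 0 \<omega> \<in> A}"
        using sgD[OF A] by (simp add: emeasure_eq_measure)
      also have "\<dots> = emeasure (density lborel ?f) A" by (rule em[OF A])
      finally show "emeasure (distr M lborel (\<lambda>\<omega>. cl_D eps (\<lambda>k. T k \<omega>) i)) A = emeasure (density lborel ?f) A" .
    qed simp
  qed
  have I: "indep_vars (\<lambda>_. borel)
           (\<lambda>j \<omega>. case j of Inl i \<Rightarrow> cl_B eps (\<lambda>k. T k \<omega>) i
                             | Inr i \<Rightarrow> cl_D eps (\<lambda>k. T k \<omega>) i)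
           ({Inl i | i. i \<ge> 1} \<union> {Inr i | i. i \<ge> 1})"
    unfolding XXeq by (rule C.indep_XX)
  have Bd: "\<forall>i\<ge>1. distr M borel (\<lambda>\<omega>. cl_B eps (\<lambda>k. T k \<omega>) i)
                 = distr M borel (\<lambda>\<omega>. cl_B eps (\<lambda>k. T k \<omega>) 1)"
    using C.distr_B by blast
  have Dd: "\<forall>i\<ge>1. distributed M lborel (\<lambda>\<omega>. cl_D eps (\<lambda>k. T k \<omega>) i) (exponential_density lam)"
    using Ddist by blast
  show ?thesis using I Bd Dd by (intro conjI)
qed

end
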